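(* A map $T:\mathrm{PSym}(3)\to\mathrm{Sym}(3)$ satisfies Axioms (A0.1), (A0.2), (A0.3), (A1), (A2) and (A3) if and only if there exist constants $G,\Lambda\in\mathbb R$ with $G\neq0$ and $3\Lambda+2G\neq0$ such that $$T(U)=2G\,\log U+\Lambda\,\mathrm{tr}(\log U)\,\mathbb 1\qquad\text{for all }U\in\mathrm{PSym}(3),$$ equivalently, constants $G,K\in\mathbb R\setminus\{0\}$ with $T(U)=2G\,\mathrm{dev}_3\log U+K\,\mathrm{tr}(\log U)\,\mathbb 1$ for all $U\in\mathrm{PSym}(3)$ (where $K=\Lambda+\tfrac23 G$).
   Context: $\mathrm{Sym}(3)$: real symmetric $3\times3$ matrices; $\mathrm{PSym}(3)$: symmetric positive definite ones; $\mathbb 1$: identity; $\mathrm{O}(3)$: orthogonal group; $\log:\mathrm{PSym}(3)\to\mathrm{Sym}(3)$ the principal matrix logarithm; $\mathrm{dev}_3X=X-\tfrac13\mathrm{tr}(X)\mathbb 1$; coaxial means commuting. Axiom (A0.1): $T$ continuous. Axiom (A0.2): $T(U)=0$ iff $U=\mathbb 1$. Axiom (A0.3): $T(Q^TUQ)=Q^TT(U)Q$ for all $Q\in\mathrm O(3)$, $U\in\mathrm{PSym}(3)$. Axiom (A1): for every $\alpha>0$ there is $s\in\mathbb R$ such that for all $U\in\mathrm{PSym}(3)$: $U=\mathrm{diag}(\alpha,\alpha^{-1},1)$ iff $T(U)=\mathrm{diag}(s,-s,0)$. Axiom (A2): for every $\lambda>0$ there is $a\in\mathbb R$ such that for all $U\in\mathrm{PSym}(3)$: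 $U=\lambda\mathbb 1$ iff $T(U)=a\mathbb 1$. Axiom (A3): $T(U_1U_2)=T(U_1)+T(U_2)$ for all coaxial $U_1,U_2\in\mathrm{PSym}(3)$. *)

theory Defs
  imports "HOL-Analysis.Analysis"
begin

type_synonym mat3 = "real^3^3"

definition Sym3 :: "mat3 set" where
  "Sym3 = {A. transpose A = A}"

definition PSym3 :: "mat3 set" where
  "PSym3 = {U. transpose U = U \<and> (\<forall>x::real^3. x \<noteq> 0 \<longrightarrow> x \<bullet> (U *v x) > 0)}"

primrec matpow :: "mat3 \<Rightarrow> nat \<Rightarrow> mat3" where
  "matpow A 0 = mat 1"
| "matpow A (Suc n) = A ** matpow A n"

definition mexp :: "mat3 \<Rightarrow> mat3" where
  "mexp A = (\<Sum>n. (1 / fact n) *\<^sub>R matpow A n)"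

definition mlog :: "mat3 \<Rightarrow> mat3" where
  "mlog U = (THE L. L \<in> Sym3 \<and> mexp L = U)"

definition dev3 :: "mat3 \<Rightarrow> mat3" where
  "dev3 X = X - (trace X / 3) *\<^sub>R mat 1"

definition diag3 :: "real \<Rightarrow> real \<Rightarrow> real \<Rightarrow> mat3" where
  "diag3 a b c = (\<chi> i j. if i = j then (if i = 1 then a else if i = 2 then b else c) else 0)"

definition coaxial :: "mat3 \<Rightarrow> mat3 \<Rightarrow> bool" where
  "coaxial A B \<longleftrightarrow> A ** B = B ** A"

definition axioms_T :: "(mat3 \<Rightarrow> mat3) \<Rightarrow> bool" where
  "axioms_T T \<longleftrightarrow>
     continuous_on PSym3 T
   \<and> (\<forall>U\<in>PSym3. T U = 0 \<longleftrightarrow> U = mat 1)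
   \<and> (\<forall>Q U. orthogonal_matrix Q \<longrightarrow> U \<in> PSym3 \<longrightarrow>
          T (transpose Q ** U ** Q) = transpose Q ** T U ** Q)
   \<and> (\<forall>\<alpha>>0. \<exists>s. \<forall>U\<in>PSym3. U = diag3 \<alpha> (1/\<alpha>) 1 \<longleftrightarrow> T U = diag3 s (-s) 0)
   \<and> (\<forall>l>0. \<exists>a. \<forall>U\<in>PSym3. U = l *\<^sub>R mat 1 \<longleftrightarrow> T U = a *\<^sub>R mat 1)
   \<and> (\<forall>U1\<in>PSym3. \<forall>U2\<in>PSym3. coaxial U1 U2 \<longrightarrow> T (U1 ** U2) = T U1 + T U2)"

end

theory Submission
  imports Defs
begin


definition dg :: "real^3 \<Rightarrow> mat3" where
  "dg v = (\<chi> i j. if i = j then v$i else 0)"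

definition vmap :: "(real \<Rightarrow> real) \<Rightarrow> real^3 \<Rightarrow> real^3" where
  "vmap f v = (\<chi> i. f (v$i))"

lemma vmap_nth[simp]: "vmap f v $ i = f (v $ i)" by (simp add: vmap_def)

lemma dg_nth[simp]: "dg v $ i $ j = (if i = j then v$i else 0)" by (simp add: dg_def)

lemma matrix_add_rdistrib': "(B + C) ** A = B ** A + C ** (A::'a::semiring_1^'n^'m)"
  by (simp add: matrix_matrix_mult_def vec_eq_iff sum.distrib distrib_right)

lemma dg_mult: "dg a ** dg b = dg (\<chi> i. a$i * b$i)"
  by (simp add: matrix_matrix_mult_def vec_eq_iff sum_3 forall_3)

lemma dg_one: "dg (\<chi> i. 1) = mat 1"
  by (simp add: vec_eq_iff mat_def)

lemma transpose_dg[simp]: "transpose (dg v) = dg v"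
  by (simp add: transpose_def vec_eq_iff)

lemma dg_add: "dg (a + b) = dg a + dg b" by (simp add: vec_eq_iff)
lemma dg_scaleR: "dg (c *\<^sub>R a) = c *\<^sub>R dg a" by (simp add: vec_eq_iff)
lemma dg_0[simp]: "dg 0 = 0" by (simp add: vec_eq_iff)
lemma trace_dg: "trace (dg v) = v$1 + v$2 + v$3" by (simp add: trace_def sum_3)

lemma dg_mulv: "dg v *v x = (\<chi> i. v$i * x$i)"
  by (simp add: matrix_vector_mult_def vec_eq_iff sum_3 forall_3)

lemma diag3_dg: "diag3 a b c = dg (vector [a,b,c])"
  unfolding diag3_def dg_def by (rule vec_eq_iff[THEN iffD2], auto simp: vec_eq_iff vector_def)
    (metis exhaust_3 num1_eq_iff)

definition cj :: "mat3 \<Rightarrow> mat3 \<Rightarrow> mat3" where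
  "cj P M = P ** M ** transpose P"

lemma orth_TP: "orthogonal_matrix P \<Longrightarrow> transpose P ** P = mat 1"
  by (simp add: orthogonal_matrix_def)
lemma orth_PT: "orthogonal_matrix P \<Longrightarrow> P ** transpose P = mat 1"
  by (simp add: orthogonal_matrix_def)

lemma cj_mult: "orthogonal_matrix P \<Longrightarrow> cj P (M ** N) = cj P M ** cj P N"
proof -
  assume P: "orthogonal_matrix P"
  have "cj P M ** cj P N = P ** M ** (transpose P ** P) ** N ** transpose P"
    by (simp add: cj_def matrix_mul_assoc)
  also have "\<dots> = cj P (M ** N)" using orth_TP[OF P] by (simp add: cj_def matrix_mul_assoc)
  finally show ?thesis by simp
qed

lemma cj_one: "orthogonal_matrix P \<Longrightarrow> cj P (mat 1) = mat 1"
  by (simp add: cj_def orth_PT)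

lemma cj_add: "cj P (M + N) = cj P M + cj P N"
  by (simp add: cj_def matrix_add_ldistrib matrix_add_rdistrib')

lemma cj_scaleR: "cj P (c *\<^sub>R M) = c *\<^sub>R cj P M"
  by (simp add: cj_def matrix_scalar_ac vec_eq_iff matrix_matrix_mult_def sum_distrib_left mult_ac)

lemma cj_diff: "cj P (M - N) = cj P M - cj P N"
  using cj_add[of P "M - N" N] by simp

lemma cj_0[simp]: "cj P 0 = 0"
  using cj_scaleR[of P 0 0] by simp

lemma linear_cj: "linear (cj P)"
  by (rule linearI) (simp_all add: cj_add cj_scaleR)

lemma bounded_linear_cj: "bounded_linear (cj P)"
  using linear_cj linear_conv_bounded_linear by blast

lemma transpose_cj: "transpose (cj P M) = cj P (transpose M)"
  by (simp add: cj_def matrix_transpose_mul matrix_mul_assoc)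

lemma trace_cj: "orthogonal_matrix P \<Longrightarrow> trace (cj P M) = trace M"
  by (simp add: cj_def trace_mul_sym matrix_mul_assoc orth_TP)

lemma cj_cj: "cj P (cj Q M) = cj (P ** Q) M"
  by (simp add: cj_def matrix_transpose_mul matrix_mul_assoc)

lemma cj_inv: "orthogonal_matrix P \<Longrightarrow> cj (transpose P) (cj P M) = M"
  by (simp add: cj_cj) (simp add: cj_def orth_TP)

lemma cj_inv2: "orthogonal_matrix P \<Longrightarrow> cj P (cj (transpose P) M) = M"
  by (simp add: cj_cj) (simp add: cj_def orth_PT)

lemma matpow_cj_dg: "orthogonal_matrix P \<Longrightarrow>
   matpow (cj P (dg x)) n = cj P (dg (\<chi> i. x$i ^ n))"
proof (induction n)
  case 0 then show ?case by (simp add: dg_one cj_one)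
next
  case (Suc n)
  then show ?case by (simp add: cj_mult[symmetric] dg_mult mult_ac)
qed

lemma sums_vec:
  assumes "\<And>i. (\<lambda>n. f n i) sums s i"
  shows "(\<lambda>n. \<chi> i. f n i) sums (\<chi> i. s i)"
proof -
  have "(\<lambda>N. \<Sum>n<N. \<chi> i. f n i) = (\<lambda>N. \<chi> i. \<Sum>n<N. f n i)"
    by (rule ext) (simp add: vec_eq_iff sum_component)
  moreover have "(\<lambda>N. \<chi> i. \<Sum>n<N. f n i) \<longlonglongrightarrow> (\<chi> i. s i)"
    using assms by (intro tendsto_vec_lambda) (simp add: sums_def)
  ultimately show ?thesis by (simp add: sums_def)
qed

lemma linear_dg: "linear dg"
  by (rule linearI) (simp_all add: dg_add dg_scaleR)

lemma mexp_cj_dg: assumes P: "orthogonal_matrix P"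
  shows "mexp (cj P (dg x)) = cj P (dg (vmap exp x))"
proof -
  have "(\<lambda>n. (\<chi> i. x$i ^ n / fact n)) sums (\<chi> i. exp (x$i))"
  proof (rule sums_vec)
    fix i show "(\<lambda>n. x $ i ^ n / fact n) sums exp (x $ i)"
      using exp_converges[of "x$i"] by (simp add: divide_inverse mult_ac)
  qed
  then have "(\<lambda>n. cj P (dg (\<chi> i. x$i ^ n / fact n))) sums cj P (dg (\<chi> i. exp (x$i)))"
    using bounded_linear.sums[OF bounded_linear_cj] bounded_linear.sums[OF linear_dg[unfolded linear_conv_bounded_linear]]
    by blast
  moreover have "(\<lambda>n. (1 / fact n) *\<^sub>R matpow (cj P (dg x)) n) = (\<lambda>n. cj P (dg (\<chi> i. x$i ^ n / fact n)))"
    by (rule ext) (simp add: matpow_cj_dg[OF P] cj_scaleR[symmetric] dg_scaleR[symmetric], rule arg_cong[where f="\<lambda>v. cj P (dg v)"], simp add: vec_eq_iff)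
  ultimately show ?thesis unfolding mexp_def by (simp add: sums_iff vmap_def)
qed



lemma sym_dot: "transpose A = A \<Longrightarrow> x \<bullet> (A *v y) = (A *v x) \<bullet> (y::real^3)"
  by (metis dot_lmul_matrix transpose_matrix_vector)

lemma quad_scale: "(c *\<^sub>R y) \<bullet> (A *v (c *\<^sub>R y)) = c^2 * (y \<bullet> (A *v (y::real^3)))"
  by (simp add: matrix_vector_mult_scaleR power2_eq_square)

lemma eig_sub:
  fixes A :: mat3
  assumes symA: "transpose A = A" and W: "subspace W" and x0: "x0 \<in> W" "x0 \<noteq> 0"
    and inv: "\<forall>x\<in>W. A *v x \<in> W"
  shows "\<exists>v\<in>W. norm v = 1 \<and> A *v v = (v \<bullet> (A *v v)) *\<^sub>R v"
proof -
  define K where "K = W \<inter> sphere 0 1"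
  have "closed W" using W closed_subspace by blast
  then have cK: "compact K" unfolding K_def by (simp add: closed_Int_compact)
  have "x0 /\<^sub>R norm x0 \<in> K" using x0 W unfolding K_def by (simp add: subspace_scale)
  then have neK: "K \<noteq> {}" by blast
  have cf: "continuous_on K (\<lambda>x. x \<bullet> (A *v x))"
    by (intro continuous_intros continuous_on_inner linear_continuous_on matrix_vector_mul_linear) 
  obtain v where vK: "v \<in> K" and vmax: "\<And>y. y \<in> K \<Longrightarrow> y \<bullet> (A *v y) \<le> v \<bullet> (A *v v)"
    using continuous_attains_sup[OF cK neK cf] by blast
  define mu where "mu = v \<bullet> (A *v v)"
  have vW: "v \<in> W" and nv: "norm v = 1" using vK by (auto simp: K_def)
  have vv: "v \<bullet> v = 1" using nv by (simp add: norm_eq_1)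
  have bound: "y \<bullet> (A *v y) \<le> mu * (y \<bullet> y)" if "y \<in> W" for y
  proof (cases "y = 0")
    case True then show ?thesis by simp
  next
    case False
    have "(1/norm y) *\<^sub>R y \<in> K" using that False W by (simp add: K_def subspace_scale)
    then have "((1/norm y) *\<^sub>R y) \<bullet> (A *v ((1/norm y) *\<^sub>R y)) \<le> mu" using vmax mu_def by blast
    then have "(1/norm y)^2 * (y \<bullet> (A *v y)) \<le> mu" unfolding quad_scale .
    moreover have "(norm y)^2 = y \<bullet> y" by (simp add: power2_norm_eq_inner)
    moreover have "norm y > 0" using False by simp
    ultimately show ?thesis by (simp add: field_simps power2_eq_square)
  qed
  have key: "w \<bullet> (A *v v) = 0" if wW: "w \<in> W" and wv: "w \<bullet> v = 0" for w
  proof (rule ccontr)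
    define a where "a = w \<bullet> (A *v v)"
    define c where "c = mu * (w \<bullet> w) - w \<bullet> (A *v w)"
    assume "w \<bullet> (A *v v) \<noteq> 0"
    then have a0: "a \<noteq> 0" by (simp add: a_def)
    have ineq: "2 * t * a \<le> t^2 * c" for t
    proof -
      have "v + t *\<^sub>R w \<in> W" using W vW wW by (simp add: subspace_add subspace_scale)
      from bound[OF this] have "(v + t *\<^sub>R w) \<bullet> (A *v (v + t *\<^sub>R w)) \<le> mu * ((v + t *\<^sub>R w) \<bullet> (v + t *\<^sub>R w))" .
      moreover have "v \<bullet> (A *v w) = w \<bullet> (A *v v)" using sym_dot[OF symA, of v w] by (simp add: inner_commute)
      ultimately show ?thesis
        using vv wv by (simp add: matrix_vector_right_distrib matrix_vector_mult_scaleR inner_add_left inner_add_right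
           a_def c_def mu_def inner_commute[of w v] algebra_simps power2_eq_square)
    qed
    define d where "d = \<bar>c\<bar> + 1"
    have d0: "d > 0" by (simp add: d_def add_pos_nonneg)
    have "d^2 * (2 * (a/d) * a) \<le> d^2 * ((a/d)^2 * c)"
      by (rule mult_left_mono[OF ineq]) simp
    then have "2 * (a * a) * d \<le> (a * a) * c" using d0 by (simp add: field_simps power2_eq_square)
    moreover have "a * a > 0" using a0 by (auto simp: zero_less_mult_iff linorder_neq_iff)
    ultimately have "(a * a) * (2 * d) \<le> (a * a) * c" "a * a > 0" by (simp_all add: algebra_simps)
    then have "2 * d \<le> c" using mult_le_cancel_left_pos by blast
    then have "2 * (\<bar>c\<bar> + 1) \<le> c" by (simp add: d_def)
    then show False by (cases "c \<ge> 0") auto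
  qed
  define w where "w = A *v v - mu *\<^sub>R v"
  have wW: "w \<in> W" using inv vW W by (simp add: w_def subspace_diff subspace_scale)
  have wv: "w \<bullet> v = 0" using vv by (simp add: w_def inner_diff_left mu_def inner_commute[of "A *v v" v])
  have "w \<bullet> w = w \<bullet> (A *v v) - mu * (w \<bullet> v)" by (simp add: w_def inner_diff_right)
  also have "\<dots> = 0" using key[OF wW wv] wv by simp
  finally have "w = 0" by simp
  then show ?thesis using vW nv by (intro bexI[of _ v]) (auto simp: w_def mu_def)
qed



lemma cross_perp:
  fixes a b x :: "real^3"
  assumes "x \<bullet> a = 0" "x \<bullet> b = 0" "a \<bullet> a = 1" "b \<bullet> b = 1" "a \<bullet> b = 0"
  shows "x = (x \<bullet> cross3 a b) *\<^sub>R cross3 a b"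
proof -
  define c where "c = cross3 a b"
  have id1: "cross3 c x = (a \<bullet> x) *\<^sub>R b - (b \<bullet> x) *\<^sub>R a" unfolding c_def by (simp add: cross3_simps forall_3)
  have id2: "cross3 c (cross3 c x) = (c \<bullet> x) *\<^sub>R c - (c \<bullet> c) *\<^sub>R x" by (simp add: cross3_simps forall_3)
  have id3: "c \<bullet> c = (a \<bullet> a) * (b \<bullet> b) - (a \<bullet> b)^2" unfolding c_def by (simp add: cross3_simps power2_eq_square)
  have "cross3 c x = 0" using id1 assms by (simp add: inner_commute)
  then have "(c \<bullet> x) *\<^sub>R c - x = 0" using id2 id3 assms by simp
  then show ?thesis by (simp add: c_def inner_commute)
qed

lemma cross_unit:
  fixes a b :: "real^3"
  assumes "a \<bullet> a = 1" "b \<bullet> b = 1" "a \<bullet> b = 0"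
  shows "cross3 a b \<bullet> cross3 a b = 1" "a \<bullet> cross3 a b = 0" "b \<bullet> cross3 a b = 0"
proof -
  have id3: "cross3 a b \<bullet> cross3 a b = (a \<bullet> a) * (b \<bullet> b) - (a \<bullet> b)^2" by (simp add: cross3_simps power2_eq_square)
  then show "cross3 a b \<bullet> cross3 a b = 1" using assms by simp
  show "a \<bullet> cross3 a b = 0" "b \<bullet> cross3 a b = 0" using dot_cross_self by (simp_all add: inner_commute)
qed

lemma colseig:
  fixes A P :: mat3
  assumes "\<And>j. A *v (\<chi> i. P$i$j) = a$j *\<^sub>R (\<chi> i. P$i$j)"
  shows "A ** P = P ** dg a"
proof -
  have "\<And>i j. (A *v (\<chi> i. P$i$j)) $ i = a$j * P$i$j" using assms by simp
  then show ?thesis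
    by (simp add: vec_eq_iff matrix_matrix_mult_def matrix_vector_mult_def sum_3 forall_3 mult.commute)
qed

lemma eig_to_cj:
  fixes A P :: mat3
  assumes P: "orthogonal_matrix P" and "A ** P = P ** dg a"
  shows "A = cj P (dg a)"
proof -
  have "A = A ** (P ** transpose P)" using orth_PT[OF P] by simp
  also have "\<dots> = cj P (dg a)" using assms by (simp add: matrix_mul_assoc cj_def)
  finally show ?thesis .
qed

lemma mv_scaleR[simp]: "(A::real^'n^'m) *v (c *\<^sub>R x) = c *\<^sub>R (A *v x)"
  by (simp add: vec_eq_iff matrix_vector_mult_def sum_distrib_left mult_ac)

lemma subspace_eig: "subspace {x. (A::mat3) *v x = (c::real) *\<^sub>R x}"
  unfolding subspace_def by (auto simp: matrix_vector_right_distrib mv_scaleR algebra_simps)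

lemma subspace_perp: "subspace {x::real^3. x \<bullet> v = 0}"
  by (auto simp: subspace_def inner_add_left)

lemma exists_perp: "\<exists>x::real^3. x \<noteq> 0 \<and> x \<bullet> v = 0"
proof (cases "v$1 = 0 \<and> v$2 = 0")
  case True
  then show ?thesis by (intro exI[of _ "vector [1,0,0]"]) (auto simp: inner_vec_def sum_3 vec_eq_iff forall_3 vector_def)
next
  case False
  then show ?thesis
    by (intro exI[of _ "vector [-(v$2), v$1, 0]"]) (auto simp: inner_vec_def sum_3 vec_eq_iff forall_3 vector_def)
qed

lemma sim_diag:
  fixes A B :: mat3
  assumes sA: "transpose A = A" and sB: "transpose B = B" and comm: "A ** B = B ** A"
  shows "\<exists>P a b. orthogonal_matrix P \<and> A = cj P (dg a) \<and> B = cj P (dg b)"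
proof -
  have Bc: "A *v (B *v x) = B *v (A *v x)" for x using comm by (simp add: matrix_vector_mul_assoc)
  obtain u where "norm u = 1" and u: "A *v u = (u \<bullet> (A *v u)) *\<^sub>R u"
    using eig_sub[OF sA subspace_UNIV, of "axis 1 1"] by (auto simp: axis_eq_0_iff)
  define al where "al = u \<bullet> (A *v u)"
  define E1 where "E1 = {x. A *v x = al *\<^sub>R x}"
  have "subspace E1" unfolding E1_def by (rule subspace_eig)
  moreover have "u \<in> E1" "u \<noteq> 0" using u \<open>norm u = 1\<close> by (auto simp: E1_def al_def)
  moreover have "\<forall>x\<in>E1. B *v x \<in> E1" by (auto simp: E1_def Bc matrix_vector_mult_scaleR)
  ultimately obtain v1 where "v1 \<in> E1" "norm v1 = 1" and Bv1: "B *v v1 = (v1 \<bullet> (B *v v1)) *\<^sub>R v1"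
    using eig_sub[OF sB] by blast
  then have Av1: "A *v v1 = al *\<^sub>R v1" by (simp add: E1_def)
  have v1v1: "v1 \<bullet> v1 = 1" using \<open>norm v1 = 1\<close> by (simp add: norm_eq_1)
  define b1 where "b1 = v1 \<bullet> (B *v v1)"
  define W2 where "W2 = {x. x \<bullet> v1 = 0}"
  have invA2: "\<forall>x\<in>W2. A *v x \<in> W2"
  proof
    fix x assume "x \<in> W2"
    have "(A *v x) \<bullet> v1 = x \<bullet> (A *v v1)" using sym_dot[OF sA, of x v1] by simp
    also have "\<dots> = 0" using Av1 \<open>x \<in> W2\<close> by (simp add: W2_def)
    finally show "A *v x \<in> W2" by (simp add: W2_def)
  qed
  have invB2: "\<forall>x\<in>W2. B *v x \<in> W2"
  proof
    fix x assume "x \<in> W2"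
    have "(B *v x) \<bullet> v1 = x \<bullet> (B *v v1)" using sym_dot[OF sB, of x v1] by simp
    also have "\<dots> = 0" using Bv1 \<open>x \<in> W2\<close> by (simp add: W2_def flip: b1_def)
    finally show "B *v x \<in> W2" by (simp add: W2_def)
  qed
  obtain x2 where "x2 \<noteq> 0" "x2 \<in> W2" using exists_perp[of v1] by (auto simp: W2_def)
  then obtain u2 where "u2 \<in> W2" "norm u2 = 1" and Au2: "A *v u2 = (u2 \<bullet> (A *v u2)) *\<^sub>R u2"
    using eig_sub[OF sA _ _ _ invA2] subspace_perp W2_def by blast
  define al2 where "al2 = u2 \<bullet> (A *v u2)"
  define E2 where "E2 = W2 \<inter> {x. A *v x = al2 *\<^sub>R x}"
  have "subspace E2" unfolding E2_def W2_def by (intro subspace_inter subspace_perp subspace_eig)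
  moreover have "u2 \<in> E2" "u2 \<noteq> 0" using Au2 \<open>norm u2 = 1\<close> \<open>u2 \<in> W2\<close> by (auto simp: E2_def al2_def)
  moreover have "\<forall>x\<in>E2. B *v x \<in> E2" using invB2 by (auto simp: E2_def Bc matrix_vector_mult_scaleR)
  ultimately obtain v2 where "v2 \<in> E2" "norm v2 = 1" and Bv2: "B *v v2 = (v2 \<bullet> (B *v v2)) *\<^sub>R v2"
    using eig_sub[OF sB] by blast
  then have Av2: "A *v v2 = al2 *\<^sub>R v2" and v2v1: "v2 \<bullet> v1 = 0" by (auto simp: E2_def W2_def)
  have v2v2: "v2 \<bullet> v2 = 1" using \<open>norm v2 = 1\<close> by (simp add: norm_eq_1)
  define v3 where "v3 = cross3 v1 v2"
  have v1v2: "v1 \<bullet> v2 = 0" using v2v1 by (simp add: inner_commute)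
  note cu = cross_unit[OF v1v1 v2v2 v1v2, folded v3_def]
  have eig3: "M *v v3 = (v3 \<bullet> (M *v v3)) *\<^sub>R v3"
    if sM: "transpose M = M" and m1: "M *v v1 = c1 *\<^sub>R v1" and m2: "M *v v2 = c2 *\<^sub>R v2" for M c1 c2
  proof -
    have "(M *v v3) \<bullet> v1 = 0" using sym_dot[OF sM, of v3 v1] m1 cu by (simp add: inner_commute)
    moreover have "(M *v v3) \<bullet> v2 = 0" using sym_dot[OF sM, of v3 v2] m2 cu by (simp add: inner_commute)
    ultimately have "M *v v3 = ((M *v v3) \<bullet> v3) *\<^sub>R v3"
      using cross_perp[OF _ _ v1v1 v2v2 v1v2] v3_def by blast
    then show ?thesis by (simp add: inner_commute)
  qed
  have Av3: "A *v v3 = (v3 \<bullet> (A *v v3)) *\<^sub>R v3" using eig3[OF sA Av1 Av2] .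
  have Bv3: "B *v v3 = (v3 \<bullet> (B *v v3)) *\<^sub>R v3" using eig3[OF sB Bv1 Bv2] .
  define V where "V = (\<lambda>j::3. if j = 1 then v1 else if j = 2 then v2 else v3)"
  define P :: mat3 where "P = (\<chi> i j. V j $ i)"
  have colP: "(\<chi> i. P$i$j) = V j" for j by (simp add: P_def vec_eq_iff)
  have VV: "V i \<bullet> V j = (if i = j then 1 else 0)" for i j
    using v1v1 v2v2 v1v2 cu exhaust_3[of i] exhaust_3[of j]
    by (auto simp: V_def inner_commute)
  have orthP: "orthogonal_matrix P"
    unfolding orthogonal_matrix_orthonormal_columns
  proof (intro conjI allI impI)
    fix i show "norm (column i P) = 1" using VV[of i i] colP[of i] by (simp add: column_def norm_eq_1)
  next
    fix i j :: 3 assume "i \<noteq> j"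
    then show "orthogonal (column i P) (column j P)" using VV[of i j] colP by (simp add: column_def orthogonal_def)
  qed
  define a where "a = (\<chi> j. V j \<bullet> (A *v V j))"
  define b where "b = (\<chi> j. V j \<bullet> (B *v V j))"
  have "A *v V j = a$j *\<^sub>R V j" for j
    using Av1 Av2 Av3 v1v1 v2v2 exhaust_3[of j] by (auto simp: a_def V_def)
  then have "A ** P = P ** dg a" using colseig colP by metis
  then have "A = cj P (dg a)" using eig_to_cj orthP by blast
  moreover have "B *v V j = b$j *\<^sub>R V j" for j
    using Bv1 Bv2 Bv3 exhaust_3[of j] by (auto simp: b_def V_def)
  then have "B ** P = P ** dg b" using colseig colP by metis
  then have "B = cj P (dg b)" using eig_to_cj orthP by blast
  ultimately show ?thesis using orthP by blast
qed



declare transpose_matrix_vector[simp del]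

lemma orth_mv_TP: "orthogonal_matrix P \<Longrightarrow> transpose P *v (P *v x) = x"
  by (simp add: matrix_vector_mul_assoc orth_TP)
lemma orth_mv_PT: "orthogonal_matrix P \<Longrightarrow> P *v (transpose P *v x) = x"
  by (simp add: matrix_vector_mul_assoc orth_PT)

lemma cj_mv: "cj P M *v v = P *v (M *v (transpose P *v v))"
  by (simp add: cj_def matrix_vector_mul_assoc matrix_mul_assoc)

lemma fc_eig:
  assumes P: "orthogonal_matrix P" and ev: "cj P (dg e) *v v = mu *\<^sub>R v"
  shows "cj P (dg (vmap f e)) *v v = f mu *\<^sub>R v"
proof -
  define c where "c = transpose P *v v"
  have "P *v (dg e *v c) = P *v (mu *\<^sub>R c)" using ev by (simp add: cj_mv c_def orth_mv_PT[OF P])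
  then have "transpose P *v (P *v (dg e *v c)) = transpose P *v (P *v (mu *\<^sub>R c))" by simp
  then have "dg e *v c = mu *\<^sub>R c" by (simp only: orth_mv_TP[OF P])
  then have h: "e$i * c$i = mu * c$i" for i by (simp add: dg_mulv vec_eq_iff)
  have "f (e$i) * c$i = f mu * c$i" for i
  proof (cases "c$i = 0")
    case False then have "e$i = mu" using h[of i] by simp
    then show ?thesis by simp
  qed simp
  then have "dg (vmap f e) *v c = f mu *\<^sub>R c" by (simp add: dg_mulv vec_eq_iff)
  moreover have "P *v c = v" using orth_mv_PT[OF P] by (simp add: c_def)
  ultimately show ?thesis by (simp add: cj_mv c_def[symmetric])
qed

lemma sym_spectral: "transpose A = A \<Longrightarrow> \<exists>P x. orthogonal_matrix P \<and> A = cj P (dg x)"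
  using sim_diag[of A A] by blast

lemma mv_col: "A *v (\<chi> i. B$i$j) = (\<chi> i. (A ** B)$i$j)"
  by (simp add: vec_eq_iff matrix_matrix_mult_def matrix_vector_mult_def)

lemma mult_dg_nth: "(P ** dg y)$i$j = P$i$j * y$j"
  using exhaust_3[of j] by (auto simp: matrix_matrix_mult_def sum_3)

lemma cols_eig:
  assumes P: "orthogonal_matrix P"
  shows "cj P (dg y) *v (\<chi> i. P$i$j) = y$j *\<^sub>R (\<chi> i. P$i$j)"
proof -
  have "cj P (dg y) ** P = P ** dg y" using P by (simp add: cj_def matrix_mul_assoc[symmetric] orth_TP)
  then show ?thesis by (simp add: mv_col mult_dg_nth vec_eq_iff mult.commute)
qed

lemma vmap_comp: "vmap f (vmap g x) = vmap (f \<circ> g) x" by (simp add: vec_eq_iff)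
lemma vmap_id: "(\<And>i. f (x$i) = x$i) \<Longrightarrow> vmap f x = x" by (simp add: vec_eq_iff)

lemma sym_cj_dg: "transpose (cj P (dg x)) = cj P (dg x)"
  by (simp add: transpose_cj)

lemma mexp_inj:
  assumes "transpose L1 = L1" "transpose L2 = L2" "mexp L1 = mexp L2"
  shows "L1 = L2"
proof -
  obtain P x where P: "orthogonal_matrix P" and L1: "L1 = cj P (dg x)" using sym_spectral assms(1) by blast
  obtain R y where R: "orthogonal_matrix R" and L2: "L2 = cj R (dg y)" using sym_spectral assms(2) by blast
  have U: "cj P (dg (vmap exp x)) = cj R (dg (vmap exp y))"
    using assms(3) by (simp add: L1 L2 mexp_cj_dg P R)
  have "L1 *v (\<chi> i. R$i$j) = y$j *\<^sub>R (\<chi> i. R$i$j)" for j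
  proof -
    have "cj P (dg (vmap exp x)) *v (\<chi> i. R$i$j) = exp (y$j) *\<^sub>R (\<chi> i. R$i$j)"
      unfolding U using cols_eig[OF R, of "vmap exp y" j] by simp
    from fc_eig[OF P this, of ln] show ?thesis
      by (simp add: vmap_comp L1 o_def vmap_id)
  qed
  then have "L1 ** R = R ** dg y" by (rule colseig)
  then show ?thesis using eig_to_cj[OF R] L2 by simp
qed

lemma mlog_mexp: "transpose L = L \<Longrightarrow> mlog (mexp L) = L"
  unfolding mlog_def Sym3_def
  by (rule the_equality) (auto intro: mexp_inj)

lemma mlog_cj:
  assumes P: "orthogonal_matrix P" and d: "\<And>i. d$i > 0"
  shows "mlog (cj P (dg d)) = cj P (dg (vmap ln d))"
proof -
  have "cj P (dg d) = mexp (cj P (dg (vmap ln d)))"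
    using d by (simp add: mexp_cj_dg[OF P] vmap_comp o_def vmap_id)
  then show ?thesis by (simp add: mlog_mexp sym_cj_dg)
qed

lemma PSym3_spectral:
  assumes "U \<in> PSym3"
  shows "\<exists>P d. orthogonal_matrix P \<and> (\<forall>i. d$i > 0) \<and> U = cj P (dg d)"
proof -
  have sU: "transpose U = U" using assms by (simp add: PSym3_def)
  obtain P d where P: "orthogonal_matrix P" and U: "U = cj P (dg d)" using sym_spectral[OF sU] by blast
  have "d$j > 0" for j
  proof -
    define q where "q = (\<chi> i. P$i$j)"
    have "norm q = 1" using P unfolding orthogonal_matrix_orthonormal_columns
      by (simp add: q_def column_def)
    then have qq: "q \<bullet> q = 1" "q \<noteq> 0" by (auto simp: norm_eq_1)
    have "q \<bullet> (U *v q) > 0" using assms qq by (simp add: PSym3_def)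
    moreover have "U *v q = d$j *\<^sub>R q" unfolding q_def U by (rule cols_eig[OF P])
    ultimately show ?thesis using qq by simp
  qed
  then show ?thesis using P U by blast
qed

lemma cj_dg_PSym3:
  assumes P: "orthogonal_matrix P" and d: "\<And>i. d$i > 0"
  shows "cj P (dg d) \<in> PSym3"
proof -
  have "x \<bullet> (cj P (dg d) *v x) > 0" if "x \<noteq> 0" for x
  proof -
    define c where "c = transpose P *v x"
    have "c \<noteq> 0" using that orth_mv_PT[OF P, of x] by (auto simp: c_def)
    have "x \<bullet> (cj P (dg d) *v x) = x \<bullet> (P *v (dg d *v c))" unfolding cj_mv c_def ..
    also have "\<dots> = c \<bullet> (dg d *v c)" 
      unfolding c_def transpose_matrix_vector dot_lmul_matrix ..
    also have "\<dots> = (\<Sum>i\<in>UNIV. d$i * (c$i)^2)" by (simp add: inner_vec_def dg_mulv power2_eq_square mult_ac)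
    also have "\<dots> > 0"
    proof -
      obtain k where "c$k \<noteq> 0" using \<open>c \<noteq> 0\<close> by (auto simp: vec_eq_iff)
      then have "d$k * (c$k)^2 > 0" using d by simp
      moreover have "\<forall>i\<in>UNIV. d$i * (c$i)^2 \<ge> 0" using d by (simp add: less_imp_le)
      ultimately show ?thesis by (intro sum_pos2[of UNIV k]) auto
    qed
    finally show ?thesis .
  qed
  then show ?thesis by (simp add: PSym3_def sym_cj_dg)
qed

lemma mlog_PSym3: 
  assumes "U \<in> PSym3" shows "transpose (mlog U) = mlog U \<and> mexp (mlog U) = U"
proof -
  obtain P d where P: "orthogonal_matrix P" and d: "\<forall>i. d$i > 0" and U: "U = cj P (dg d)"
    using PSym3_spectral[OF assms] by blast
  have m: "mlog U = cj P (dg (vmap ln d))" using mlog_cj[OF P] d U by blast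
  have "vmap exp (vmap ln d) = d" using d by (simp add: vec_eq_iff)
  then show ?thesis unfolding m using P U by (simp add: sym_cj_dg mexp_cj_dg)
qed



declare transpose_matrix_vector[simp del]

lemma cont_mm:
  fixes f g :: "'a::topological_space \<Rightarrow> mat3"
  assumes "continuous_on S f" "continuous_on S g"
  shows "continuous_on S (\<lambda>x. f x ** g x)"
  unfolding matrix_matrix_mult_def
  by (intro continuous_on_vec_lambda continuous_on_sum continuous_on_mult continuous_on_component assms)

lemma cont_transpose:
  fixes f :: "'a::topological_space \<Rightarrow> mat3"
  assumes "continuous_on S f"
  shows "continuous_on S (\<lambda>x. transpose (f x))"
  unfolding transpose_def
  by (intro continuous_on_vec_lambda continuous_on_component assms)

lemma cont_dg:
  fixes f :: "'a::topological_space \<Rightarrow> real^3"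
  assumes "continuous_on S f"
  shows "continuous_on S (\<lambda>x. dg (f x))"
  unfolding dg_def
proof (intro continuous_on_vec_lambda)
  fix i j :: 3
  show "continuous_on S (\<lambda>x. if i = j then f x $ i else 0)"
    by (cases "i = j") (simp_all add: continuous_on_component assms)
qed

lemma cont_vmap_exp:
  fixes f :: "'a::topological_space \<Rightarrow> real^3"
  assumes "continuous_on S f"
  shows "continuous_on S (\<lambda>x. vmap exp (f x))"
  unfolding vmap_def
  by (intro continuous_on_vec_lambda continuous_on_exp continuous_on_component assms)

lemma cont_cj:
  fixes f g :: "'a::topological_space \<Rightarrow> mat3"
  assumes "continuous_on S f" "continuous_on S g"
  shows "continuous_on S (\<lambda>x. cj (f x) (g x))"
  unfolding cj_def by (intro cont_mm cont_transpose assms)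

definition OS :: "mat3 set" where "OS = {P. orthogonal_matrix P}"

lemma compact_OS: "compact OS"
proof -
  have "OS = {P. transpose P ** P = mat 1}" by (simp add: OS_def orthogonal_matrix)
  moreover have "closed {P::mat3. transpose P ** P = mat 1}"
    by (intro closed_Collect_eq cont_mm cont_transpose continuous_on_id continuous_on_const)
  ultimately have "closed OS" by simp
  moreover have "bounded OS"
  proof -
    have "norm P \<le> 3" if "P \<in> OS" for P
    proof -
      have r: "norm (P$i) = 1" for i using that
        unfolding OS_def orthogonal_matrix_orthonormal_rows by (simp add: row_def)
      have "norm P = L2_set (\<lambda>i. norm (P$i)) UNIV" by (simp add: norm_vec_def)
      also have "\<dots> \<le> (\<Sum>i\<in>UNIV. norm (P$i))" by (rule L2_set_le_sum) simp
      also have "\<dots> = 3" by (simp add: r)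
      finally show ?thesis .
    qed
    then show ?thesis by (auto simp: bounded_iff)
  qed
  ultimately show ?thesis by (simp add: compact_eq_bounded_closed)
qed

definition XB :: "real \<Rightarrow> (real^3) set" where "XB R = {x. \<forall>i. \<bar>x$i\<bar> \<le> R}"

lemma compact_XB: "compact (XB R)"
proof -
  have h: "\<And>a::real. \<bar>a\<bar> \<le> R \<longleftrightarrow> -R \<le> a \<and> a \<le> R" by auto
  have "XB R = cbox (\<chi> i. -R) (\<chi> i. R)" by (simp add: XB_def mem_box_cart h set_eq_iff)
  then show ?thesis by simp
qed

definition Phi :: "mat3 \<times> (real^3) \<Rightarrow> mat3 \<times> mat3" where
  "Phi z = (cj (fst z) (dg (vmap exp (snd z))), cj (fst z) (dg (snd z)))"

definition GR :: "real \<Rightarrow> (mat3 \<times> mat3) set" where "GR R = Phi ` (OS \<times> XB R)"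
definition SR :: "real \<Rightarrow> mat3 set" where "SR R = fst ` GR R"

lemma compact_GR: "compact (GR R)"
  unfolding GR_def
proof (rule compact_continuous_image)
  show "compact (OS \<times> XB R)" by (intro compact_Times compact_OS compact_XB)
  show "continuous_on (OS \<times> XB R) Phi"
    unfolding Phi_def
    by (intro continuous_on_Pair cont_cj cont_dg cont_vmap_exp continuous_on_fst continuous_on_snd continuous_on_id)
qed

lemma mlog_Phi: "orthogonal_matrix P \<Longrightarrow> mlog (cj P (dg (vmap exp x))) = cj P (dg x)"
  using mlog_cj[of P "vmap exp x"] by (simp add: vmap_comp o_def vmap_id)

lemma GR_graph: "GR R = (\<lambda>U. (U, mlog U)) ` SR R"
proof -
  have *: "z \<in> GR R \<Longrightarrow> snd z = mlog (fst z)" for z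
    by (auto simp: GR_def Phi_def OS_def mlog_Phi)
  show ?thesis
  proof
    show "GR R \<subseteq> (\<lambda>U. (U, mlog U)) ` SR R"
    proof
      fix z assume z: "z \<in> GR R"
      then have "fst z \<in> SR R" by (simp add: SR_def)
      moreover have "z = (fst z, mlog (fst z))" using *[OF z] by (metis prod.collapse)
      ultimately show "z \<in> (\<lambda>U. (U, mlog U)) ` SR R" by blast
    qed
  next
    show "(\<lambda>U. (U, mlog U)) ` SR R \<subseteq> GR R"
    proof
      fix y assume "y \<in> (\<lambda>U. (U, mlog U)) ` SR R"
      then obtain z where z: "z \<in> GR R" and y: "y = (fst z, mlog (fst z))" by (auto simp: SR_def)
      have "y = z" using *[OF z] y by (metis prod.collapse)
      then show "y \<in> GR R" using z by simp
    qed
  qed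
qed

lemma mlog_cont_SR: "continuous_on (SR R) mlog"
proof (rule continuous_from_closed_graph)
  show "compact (snd ` GR R)" by (intro compact_continuous_image continuous_on_snd continuous_on_id compact_GR)
  show "mlog \<in> SR R \<rightarrow> snd ` GR R" by (auto simp: GR_graph image_iff)
  show "closed ((\<lambda>x. (x, mlog x)) ` SR R)" using compact_GR[of R] GR_graph compact_imp_closed by metis
qed

lemma quad_bound:
  fixes A :: mat3
  assumes q: "norm q = 1"
  shows "\<bar>q \<bullet> (A *v q)\<bar> \<le> 9 * norm A"
proof -
  have "\<bar>q \<bullet> (A *v q)\<bar> \<le> norm q * norm (A *v q)" by (rule Cauchy_Schwarz_ineq2)
  also have "\<dots> = norm (A *v q)" using q by simp
  also have "\<dots> \<le> (\<Sum>i\<in>UNIV. \<bar>(A *v q)$i\<bar>)" by (rule norm_le_l1_cart)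
  also have "\<dots> \<le> (\<Sum>i\<in>(UNIV::3 set). 3 * norm A)"
  proof (rule sum_mono)
    fix i :: 3
    have "\<bar>(A *v q)$i\<bar> = \<bar>\<Sum>j\<in>UNIV. A$i$j * q$j\<bar>" by (simp add: matrix_vector_mult_def)
    also have "\<dots> \<le> (\<Sum>j\<in>UNIV. \<bar>A$i$j * q$j\<bar>)" by (rule sum_abs)
    also have "\<dots> \<le> (\<Sum>j\<in>(UNIV::3 set). norm A)"
    proof (rule sum_mono)
      fix j :: 3
      have "\<bar>A$i$j\<bar> \<le> norm (A$i)" by (rule component_le_norm_cart)
      also have "\<dots> \<le> norm A" by (rule Finite_Cartesian_Product.norm_nth_le)
      finally have a: "\<bar>A$i$j\<bar> \<le> norm A" .
      have "\<bar>q$j\<bar> \<le> 1" using component_le_norm_cart[of q j] q by simp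
      then have "\<bar>A$i$j\<bar> * \<bar>q$j\<bar> \<le> norm A * 1" using a by (intro mult_mono) auto
      then show "\<bar>A$i$j * q$j\<bar> \<le> norm A" by (simp add: abs_mult)
    qed
    also have "\<dots> = 3 * norm A" by simp
    finally show "\<bar>(A *v q)$i\<bar> \<le> 3 * norm A" .
  qed
  also have "\<dots> = 9 * norm A" by simp
  finally show ?thesis .
qed

lemma quad_cj:
  assumes Q: "orthogonal_matrix Q"
  shows "x \<bullet> (cj Q (dg d) *v x) = (\<Sum>i\<in>UNIV. d$i * ((transpose Q *v x)$i)^2)"
    and "(transpose Q *v x) \<bullet> (transpose Q *v x) = x \<bullet> x"
proof -
  define c where "c = transpose Q *v x"
  have "x \<bullet> (cj Q (dg d) *v x) = x \<bullet> (Q *v (dg d *v c))" unfolding cj_mv c_def ..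
  also have "\<dots> = c \<bullet> (dg d *v c)" 
    unfolding c_def transpose_matrix_vector dot_lmul_matrix ..
  also have "\<dots> = (\<Sum>i\<in>UNIV. d$i * (c$i)^2)" by (simp add: inner_vec_def dg_mulv power2_eq_square mult_ac)
  finally show "x \<bullet> (cj Q (dg d) *v x) = (\<Sum>i\<in>UNIV. d$i * ((transpose Q *v x)$i)^2)" by (simp add: c_def)
  have "c \<bullet> c = x \<bullet> (Q *v c)" unfolding c_def transpose_matrix_vector dot_lmul_matrix ..
  also have "\<dots> = x \<bullet> x" by (simp add: c_def orth_mv_PT[OF Q])
  finally show "(transpose Q *v x) \<bullet> (transpose Q *v x) = x \<bullet> x" by (simp add: c_def)
qed

lemma quad_lower:
  assumes Q: "orthogonal_matrix Q" and m: "\<And>i. m \<le> d$i" and q: "norm q = 1"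
  shows "m \<le> q \<bullet> (cj Q (dg d) *v q)"
proof -
  define c where "c = transpose Q *v q"
  have cc: "(\<Sum>i\<in>UNIV. (c$i)^2) = 1" using quad_cj(2)[OF Q, of q] q
    by (simp add: c_def inner_vec_def power2_eq_square norm_eq_1)
  have "m = (\<Sum>i\<in>UNIV. m * (c$i)^2)" using cc by (simp add: sum_distrib_left[symmetric])
  also have "\<dots> \<le> (\<Sum>i\<in>UNIV. d$i * (c$i)^2)" by (rule sum_mono) (simp add: mult_right_mono m)
  also have "\<dots> = q \<bullet> (cj Q (dg d) *v q)" using quad_cj(1)[OF Q, of q d] by (simp add: c_def)
  finally show ?thesis .
qed

lemma mv_diff: "((A::mat3) - B) *v x = A *v x - B *v x"
  by (simp add: vec_eq_iff matrix_vector_mult_def sum_subtractf left_diff_distrib)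

lemma local_SR:
  assumes U0: "U0 \<in> PSym3"
  shows "\<exists>e>0. \<exists>R. \<forall>U\<in>PSym3. dist U U0 < e \<longrightarrow> U \<in> SR R"
proof -
  obtain Q d0 where Q: "orthogonal_matrix Q" and d0: "\<forall>i. d0$i > 0" and U0e: "U0 = cj Q (dg d0)"
    using PSym3_spectral[OF U0] by blast
  define m where "m = min (d0$1) (min (d0$2) (d0$3))"
  have m0: "m > 0" using d0 by (simp add: m_def)
  have mle: "m \<le> d0$i" for i using exhaust_3[of i] by (auto simp: m_def)
  define e where "e = m / 18"
  define R where "R = \<bar>ln (m/2)\<bar> + \<bar>ln (9 * norm U0 + m/2)\<bar>"
  have e0: "e > 0" using m0 by (simp add: e_def)
  have "\<forall>U\<in>PSym3. dist U U0 < e \<longrightarrow> U \<in> SR R"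
  proof (intro ballI impI)
    fix U assume U: "U \<in> PSym3" and dU: "dist U U0 < e"
    obtain P d where P: "orthogonal_matrix P" and d: "\<forall>i. d$i > 0" and Ue: "U = cj P (dg d)"
      using PSym3_spectral[OF U] by blast
    have "\<bar>ln (d$j)\<bar> \<le> R" for j
    proof -
      define p where "p = (\<chi> i. P$i$j)"
      have np: "norm p = 1" using P unfolding orthogonal_matrix_orthonormal_columns
        by (simp add: p_def column_def)
      then have pp: "p \<bullet> p = 1" by (simp add: norm_eq_1)
      have "U *v p = d$j *\<^sub>R p" unfolding p_def Ue by (rule cols_eig[OF P])
      then have dj: "d$j = p \<bullet> (U *v p)" using pp by simp
      have split: "p \<bullet> (U *v p) = p \<bullet> (U0 *v p) + p \<bullet> ((U - U0) *v p)"
        by (simp add: mv_diff inner_diff_right)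
      have b1: "\<bar>p \<bullet> ((U - U0) *v p)\<bar> \<le> 9 * norm (U - U0)" by (rule quad_bound[OF np])
      have b2: "\<bar>p \<bullet> (U0 *v p)\<bar> \<le> 9 * norm U0" by (rule quad_bound[OF np])
      have b3: "m \<le> p \<bullet> (U0 *v p)" unfolding U0e by (rule quad_lower[OF Q mle np])
      have nd: "norm (U - U0) < e" using dU by (simp add: dist_norm)
      have ne: "9 * norm (U - U0) \<le> m/2" using nd by (simp add: e_def)
      have lo: "m/2 \<le> d$j" using dj split b1[unfolded abs_le_iff] b3 ne by linarith
      have hi: "d$j \<le> 9 * norm U0 + m/2" using dj split b1[unfolded abs_le_iff] b2[unfolded abs_le_iff] ne by linarith
      have "ln (m/2) \<le> ln (d$j)" using lo m0 by simp
      moreover have "ln (d$j) \<le> ln (9 * norm U0 + m/2)"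
      proof -
        have "0 < d$j" using d by simp
        moreover have "0 < 9 * norm U0 + m/2" using m0 by (simp add: add_nonneg_pos)
        ultimately show ?thesis using hi by simp
      qed
      ultimately show ?thesis unfolding R_def by linarith
    qed
    then have "vmap ln d \<in> XB R" by (simp add: XB_def)
    moreover have "U = cj P (dg (vmap exp (vmap ln d)))" using d Ue by (simp add: vmap_comp o_def vmap_id)
    ultimately show "U \<in> SR R" using P unfolding SR_def GR_def Phi_def OS_def
      by (auto simp: image_iff intro!: bexI[of _ "(P, vmap ln d)"])
  qed
  then show ?thesis using e0 by blast
qed

lemma mlog_cont: "continuous_on PSym3 mlog"
proof (rule continuous_on_eq_continuous_within[THEN iffD2], rule ballI)
  fix U0 assume U0: "U0 \<in> PSym3"
  obtain e R where e: "e > 0" and sub: "\<forall>U\<in>PSym3. dist U U0 < e \<longrightarrow> U \<in> SR R"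
    using local_SR[OF U0] by blast
  have U0S: "U0 \<in> SR R" using sub U0 e by simp
  have "continuous (at U0 within SR R) mlog"
    using mlog_cont_SR[of R] U0S continuous_on_eq_continuous_within by blast
  moreover have "PSym3 \<inter> ball U0 e \<subseteq> SR R" using sub by (auto simp: dist_commute)
  ultimately have c: "continuous (at U0 within PSym3 \<inter> ball U0 e) mlog"
    using continuous_within_subset by blast
  have "at U0 within PSym3 = at U0 within PSym3 \<inter> ball U0 e"
    by (rule at_within_nhd[of _ "ball U0 e"]) (auto simp: e)
  then show "continuous (at U0 within PSym3) mlog" using c by (simp add: continuous_within)
qed



definition Tf :: "real \<Rightarrow> real \<Rightarrow> mat3 \<Rightarrow> mat3" where
  "Tf G La L = (2*G) *\<^sub>R L + (La * trace L) *\<^sub>R mat 1"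

lemma trace_scaleR: "trace (c *\<^sub>R (A::mat3)) = c * trace A"
  by (simp add: trace_def sum_distrib_left)

lemma trace_one3: "trace (mat 1 :: mat3) = 3" by (simp add: trace_I)

lemma trace_Tf: "trace (Tf G La L) = (2*G + 3*La) * trace L"
  by (simp add: Tf_def trace_add trace_scaleR trace_one3 algebra_simps)

lemma Tf_inj:
  assumes "G \<noteq> 0" "3*La + 2*G \<noteq> 0" "Tf G La L1 = Tf G La L2"
  shows "L1 = L2"
proof -
  have "(2*G + 3*La) * trace L1 = (2*G + 3*La) * trace L2" using assms(3) trace_Tf by metis
  moreover have "2*G + 3*La \<noteq> 0" using assms(2) by linarith
  ultimately have "trace L1 = trace L2" using mult_left_cancel by blast
  then have "(2*G) *\<^sub>R L1 = (2*G) *\<^sub>R L2" using assms(3) by (simp add: Tf_def)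
  then show ?thesis using assms(1) by simp
qed

lemma Tf_add: "Tf G La (L1 + L2) = Tf G La L1 + Tf G La L2"
  by (simp add: Tf_def trace_add scaleR_add_right scaleR_add_left algebra_simps)

lemma Tf_cj: "orthogonal_matrix Q \<Longrightarrow> Tf G La (cj Q L) = cj Q (Tf G La L)"
  by (simp add: Tf_def trace_cj cj_add cj_scaleR cj_one)

lemma eig_pos:
  assumes "U \<in> PSym3" "orthogonal_matrix P" "U = cj P (dg d)"
  shows "d$j > 0"
proof -
  define q where "q = (\<chi> i. P$i$j)"
  have "norm q = 1" using assms(2) unfolding orthogonal_matrix_orthonormal_columns
    by (simp add: q_def column_def)
  then have qq: "q \<bullet> q = 1" "q \<noteq> 0" by (auto simp: norm_eq_1)
  have "q \<bullet> (U *v q) > 0" using assms qq by (simp add: PSym3_def)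
  moreover have "U *v q = d$j *\<^sub>R q" unfolding q_def assms(3) by (rule cols_eig[OF assms(2)])
  ultimately show ?thesis using qq by simp
qed

lemma cj_PSym3_mlog:
  assumes Q: "orthogonal_matrix Q" and U: "U \<in> PSym3"
  shows "cj Q U \<in> PSym3 \<and> mlog (cj Q U) = cj Q (mlog U)"
proof -
  obtain P d where P: "orthogonal_matrix P" and d: "\<forall>i. d$i > 0" and Ud: "U = cj P (dg d)"
    using PSym3_spectral[OF U] by blast
  have QP: "orthogonal_matrix (Q ** P)" using Q P orthogonal_matrix_mul by blast
  have e: "cj Q U = cj (Q ** P) (dg d)" by (simp add: Ud cj_cj)
  show ?thesis unfolding e using cj_dg_PSym3[OF QP] mlog_cj[OF QP] mlog_cj[OF P] d
    by (simp add: Ud cj_cj)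
qed

lemma cj_id: "cj (mat 1) M = M" by (simp add: cj_def)

lemma mexp_dg: "mexp (dg x) = dg (vmap exp x)"
  using mexp_cj_dg[OF orthogonal_matrix_id, of x] by (simp add: cj_id)

lemma mlog_dg: "(\<And>i. d$i > 0) \<Longrightarrow> mlog (dg d) = dg (vmap ln d)"
  using mlog_cj[OF orthogonal_matrix_id, of d] by (simp add: cj_id)

lemma dg_PSym3: "(\<And>i. d$i > 0) \<Longrightarrow> dg d \<in> PSym3"
  using cj_dg_PSym3[OF orthogonal_matrix_id, of d] by (simp add: cj_id)

lemma mat1_dg: "mat 1 = dg (\<chi> i. 1)" by (simp add: dg_one)

lemma mlog_one: "mlog (mat 1) = 0"
  by (simp add: mat1_dg mlog_dg vec_eq_iff)

lemma T_inj_PSym3: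
  assumes "G \<noteq> 0" "3*La + 2*G \<noteq> 0" "U \<in> PSym3" "V \<in> PSym3"
    "Tf G La (mlog U) = Tf G La (mlog V)"
  shows "U = V"
proof -
  have "mlog U = mlog V" using Tf_inj assms by blast
  then show ?thesis using mlog_PSym3[OF assms(3)] mlog_PSym3[OF assms(4)] by metis
qed

lemma backward:
  fixes T :: "mat3 \<Rightarrow> mat3"
  assumes G: "G \<noteq> 0" and GL: "3*La + 2*G \<noteq> 0" and TU: "\<forall>U\<in>PSym3. T U = Tf G La (mlog U)"
  shows "axioms_T T"
  unfolding axioms_T_def
proof (intro conjI)
  have "continuous_on PSym3 (\<lambda>U. Tf G La (mlog U))"
    unfolding Tf_def trace_def
    by (intro continuous_intros continuous_on_component mlog_cont)
  then show "continuous_on PSym3 T" using TU continuous_on_cong by (smt (verit))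
next
  show "\<forall>U\<in>PSym3. (T U = 0) = (U = mat 1)"
  proof
    fix U assume U: "U \<in> PSym3"
    have I: "mat 1 \<in> PSym3" using dg_PSym3[of "\<chi> i. 1"] by (simp add: mat1_dg)
    have "Tf G La (mlog (mat 1)) = 0" by (simp add: mlog_one Tf_def trace_0[unfolded mat_0])
    then show "(T U = 0) = (U = mat 1)" using T_inj_PSym3[OF G GL U I] TU U I by metis
  qed
next
  show "\<forall>(Q::mat3) (U::mat3). orthogonal_matrix Q \<longrightarrow> U \<in> PSym3 \<longrightarrow>
          T (transpose Q ** U ** Q) = transpose Q ** T U ** Q"
  proof (intro allI impI)
    fix Q U :: mat3 assume Q: "orthogonal_matrix Q" and U: "U \<in> PSym3"
    have Q': "orthogonal_matrix (transpose Q)" using Q by (simp add: orthogonal_matrix_transpose)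
    have e: "transpose Q ** U ** Q = cj (transpose Q) U" by (simp add: cj_def)
    show "T (transpose Q ** U ** Q) = transpose Q ** T U ** Q"
      unfolding e using cj_PSym3_mlog[OF Q' U] TU U Tf_cj[OF Q'] by (simp add: cj_def)
  qed
next
  show "\<forall>\<alpha>>0. \<exists>s. \<forall>U\<in>PSym3. (U = diag3 \<alpha> (1 / \<alpha>) 1) = (T U = diag3 s (- s) 0)"
  proof (intro allI impI)
    fix \<alpha> :: real assume a: "\<alpha> > 0"
    define D where "D = diag3 \<alpha> (1 / \<alpha>) 1"
    have Dd: "D = dg (vector [\<alpha>, 1/\<alpha>, 1])" by (simp add: D_def diag3_dg)
    have pos: "(vector [\<alpha>, 1/\<alpha>, 1] :: real^3) $ i > 0" for i
      using a exhaust_3[of i] by (auto simp: vector_def)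
    have DP: "D \<in> PSym3" unfolding Dd by (rule dg_PSym3[OF pos])
    have "mlog D = dg (vector [ln \<alpha>, - ln \<alpha>, 0])"
      unfolding Dd using pos mlog_dg[of "vector [\<alpha>, 1/\<alpha>, 1]"] a
      by (simp add: ln_div) (rule arg_cong[where f=dg], simp add: vec_eq_iff forall_3 vector_def ln_div)
    then have "T D = Tf G La (dg (vector [ln \<alpha>, - ln \<alpha>, 0]))" using TU DP by simp
    also have "\<dots> = dg ((2*G) *\<^sub>R vector [ln \<alpha>, - ln \<alpha>, 0])"
      by (simp add: Tf_def trace_dg vector_3 dg_scaleR)
    also have "\<dots> = diag3 (2*G*ln \<alpha>) (-(2*G*ln \<alpha>)) 0"
      unfolding diag3_dg by (rule arg_cong[where f=dg]) (simp add: vec_eq_iff forall_3 vector_3)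
    finally have TD: "T D = diag3 (2*G*ln \<alpha>) (-(2*G*ln \<alpha>)) 0" .
    show "\<exists>s. \<forall>U\<in>PSym3. (U = diag3 \<alpha> (1 / \<alpha>) 1) = (T U = diag3 s (- s) 0)"
    proof (intro exI ballI)
      fix U assume U: "U \<in> PSym3"
      show "(U = diag3 \<alpha> (1 / \<alpha>) 1) = (T U = diag3 (2*G*ln \<alpha>) (- (2*G*ln \<alpha>)) 0)"
        using T_inj_PSym3[OF G GL U DP] TU U DP TD D_def by metis
    qed
  qed
next
  show "\<forall>l>0. \<exists>a. \<forall>U\<in>PSym3. (U = l *\<^sub>R mat 1) = (T U = a *\<^sub>R mat 1)"
  proof (intro allI impI)
    fix l :: real assume l: "l > 0"
    define D where "D = l *\<^sub>R (mat 1 :: mat3)"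
    have Dd: "D = dg (\<chi> i. l)" by (simp add: D_def mat1_dg dg_scaleR[symmetric]) (simp add: vec_eq_iff)
    have DP: "D \<in> PSym3" unfolding Dd by (rule dg_PSym3) (simp add: l)
    have "mlog D = ln l *\<^sub>R mat 1"
      unfolding Dd using l by (simp add: mlog_dg mat1_dg dg_scaleR[symmetric]) (simp add: vec_eq_iff)
    then have TD: "T D = ((2*G + 3*La) * ln l) *\<^sub>R mat 1"
      using TU DP by (simp add: Tf_def trace_scaleR trace_one3 algebra_simps)
    show "\<exists>a. \<forall>U\<in>PSym3. (U = l *\<^sub>R mat 1) = (T U = a *\<^sub>R mat 1)"
    proof (intro exI ballI)
      fix U assume U: "U \<in> PSym3"
      show "(U = l *\<^sub>R mat 1) = (T U = ((2*G + 3*La) * ln l) *\<^sub>R mat 1)"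
        using T_inj_PSym3[OF G GL U DP] TU U DP TD D_def by metis
    qed
  qed
next
  show "\<forall>U1\<in>PSym3. \<forall>U2\<in>PSym3. coaxial U1 U2 \<longrightarrow> T (U1 ** U2) = T U1 + T U2"
  proof (intro ballI impI)
    fix U1 U2 :: mat3 assume U1: "U1 \<in> PSym3" and U2: "U2 \<in> PSym3" and c: "coaxial U1 U2"
    obtain P a b where P: "orthogonal_matrix P" and e1: "U1 = cj P (dg a)" and e2: "U2 = cj P (dg b)"
      using sim_diag[of U1 U2] U1 U2 c by (auto simp: PSym3_def coaxial_def)
    have a: "\<And>i. a$i > 0" using eig_pos[OF U1 P e1] .
    have b: "\<And>i. b$i > 0" using eig_pos[OF U2 P e2] .
    have ab: "\<And>j. (\<chi> i. a$i * b$i)$j > 0" using a b by simp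
    have e12: "U1 ** U2 = cj P (dg (\<chi> i. a$i * b$i))" by (simp add: e1 e2 cj_mult[OF P, symmetric] dg_mult)
    have P12: "U1 ** U2 \<in> PSym3" unfolding e12 by (rule cj_dg_PSym3[OF P ab])
    have m12: "mlog (U1 ** U2) = cj P (dg (vmap ln (\<chi> i. a$i * b$i)))" using e12 mlog_cj[OF P ab] by simp
    have "vmap ln (\<chi> i. a$i * b$i) = vmap ln a + vmap ln b" proof -
      have "a$i \<noteq> 0" "b$i \<noteq> 0" for i using a[of i] b[of i] by auto
      then show ?thesis by (simp add: vec_eq_iff ln_mult)
    qed
    then have "mlog (U1 ** U2) = mlog U1 + mlog U2"
      using m12 mlog_cj[OF P a, folded e1] mlog_cj[OF P b, folded e2] by (simp add: cj_add dg_add)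
    then show "T (U1 ** U2) = T U1 + T U2" using TU U1 U2 P12 by (simp add: Tf_add)
  qed
qed



lemma cauchy_fe:
  fixes g :: "real \<Rightarrow> real"
  assumes add: "\<And>s t. g (s + t) = g s + g t" and cont: "continuous_on UNIV g"
  shows "g t = t * g 1"
proof -
  have g0: "g 0 = 0" using add[of 0 0] by simp
  have gn: "g (of_nat n * s) = of_nat n * g s" for n s
    by (induction n) (simp_all add: g0 add distrib_right)
  have gneg: "g (- s) = - g s" for s using add[of s "-s"] g0 by simp
  have gi: "g (of_int n * s) = of_int n * g s" for n s
  proof (cases "n \<ge> 0")
    case True then show ?thesis using gn[of "nat n" s] by simp
  next
    case False
    then have "of_int n * s = - (of_nat (nat (-n)) * s)" by simp
    then show ?thesis using gn[of "nat (-n)" s] gneg False by simp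
  qed
  have gq: "g r = r * g 1" if rQ: "r \<in> \<rat>" for r
  proof -
    obtain a b where b: "b > 0" and r: "r = of_int a / of_int b" using Rats_cases'[OF rQ] by metis
    define q where "q = (of_int a / of_int b :: real)"
    have bq: "of_int b * q = of_int a * 1" using b by (simp add: q_def)
    have "of_int b * g q = g (of_int b * q)" using gi by simp
    also have "\<dots> = of_int a * g 1" unfolding bq using gi by blast
    finally have "of_int b * g q = of_int a * g 1" .
    then have "g q = q * g 1" using b by (simp add: q_def field_simps)
    then show ?thesis using r q_def by simp
  qed
  have "closed {t. g t = t * g 1}"
    by (intro closed_Collect_eq cont continuous_intros)
  moreover have "\<rat> \<subseteq> {t. g t = t * g 1}" using gq by blast
  ultimately have "closure \<rat> \<subseteq> {t. g t = t * g 1}" by (rule closure_minimal[rotated])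
  then show ?thesis using Rats_closure_real by auto
qed

lemma dg_sandwich: "(dg s ** M ** dg t)$i$j = s$i * M$i$j * t$j"
  using exhaust_3[of i] exhaust_3[of j] by (auto simp: matrix_matrix_mult_def sum_3)

lemma orth_dg_sign: "(\<And>i. (s$i)^2 = 1) \<Longrightarrow> orthogonal_matrix (dg s)"
  by (simp add: orthogonal_matrix dg_mult power2_eq_square dg_one[symmetric])

lemma diag_of_reflect:
  assumes "\<And>s. (\<And>i. (s$i)^2 = 1) \<Longrightarrow> dg s ** M ** dg s = M"
  shows "M = dg (\<chi> i. M$i$i)"
proof -
  have "M$i$j = 0" if "i \<noteq> j" for i j
  proof -
    define s :: "real^3" where "s = (\<chi> k. if k = i then -1 else 1)"
    have "(s$k)^2 = 1" for k by (simp add: s_def)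
    then have "(dg s ** M ** dg s)$i$j = M$i$j" using assms by simp
    then have "- M$i$j = M$i$j" using that by (simp add: dg_sandwich s_def)
    then show ?thesis by simp
  qed
  then show ?thesis by (simp add: vec_eq_iff)
qed

definition Pm :: "(3 \<Rightarrow> 3) \<Rightarrow> mat3" where
  "Pm \<tau> = (\<chi> k i. if k = \<tau> i then 1 else 0)"

lemma perm_sandwich: "(transpose (Pm \<tau>) ** M ** Pm \<tau>)$i$j = M$(\<tau> i)$(\<tau> j)"
  using exhaust_3[of "\<tau> i"] exhaust_3[of "\<tau> j"]
  by (auto simp: matrix_matrix_mult_def transpose_def Pm_def sum_3)

lemma orth_Pm:
  assumes inv: "\<And>i. \<tau> (\<tau> i) = i"
  shows "orthogonal_matrix (Pm \<tau>)"
proof -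
  have "\<tau> i = \<tau> j \<longleftrightarrow> i = j" for i j using inv by metis
  then have "transpose (Pm \<tau>) ** mat 1 ** Pm \<tau> = mat 1"
    by (simp add: vec_eq_iff perm_sandwich mat_def)
  then show ?thesis by (simp add: orthogonal_matrix)
qed

lemma Pm_dg:
  assumes inv: "\<And>i. \<tau> (\<tau> i) = i"
  shows "transpose (Pm \<tau>) ** dg x ** Pm \<tau> = dg (\<chi> i. x$(\<tau> i))"
proof -
  have "\<tau> i = \<tau> j \<longleftrightarrow> i = j" for i j using inv by metis
  then show ?thesis by (simp add: vec_eq_iff perm_sandwich)
qed

definition sw :: "3 \<Rightarrow> 3 \<Rightarrow> 3 \<Rightarrow> 3" where
  "sw a b i = (if i = a then b else if i = b then a else i)"

lemma sw_inv: "sw a b (sw a b i) = i" by (simp add: sw_def)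

lemma axis_sw: "(\<chi> i. axis k (1::real) $ (sw a b i)) = axis (sw a b k) 1"
  by (auto simp: vec_eq_iff axis_def sw_def)

lemma forward:
  fixes T :: "mat3 \<Rightarrow> mat3"
  assumes ax: "axioms_T T"
  shows "\<exists>G La. G \<noteq> 0 \<and> 3*La + 2*G \<noteq> 0 \<and> (\<forall>U\<in>PSym3. T U = Tf G La (mlog U))"
proof -
  have cont: "continuous_on PSym3 T" and zero: "\<forall>U\<in>PSym3. T U = 0 \<longleftrightarrow> U = mat 1"
    and iso: "\<And>Q U. orthogonal_matrix Q \<Longrightarrow> U \<in> PSym3 \<Longrightarrow> T (transpose Q ** U ** Q) = transpose Q ** T U ** Q"
    and add: "\<And>U1 U2. U1 \<in> PSym3 \<Longrightarrow> U2 \<in> PSym3 \<Longrightarrow> coaxial U1 U2 \<Longrightarrow> T (U1 ** U2) = T U1 + T U2"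
    using ax unfolding axioms_T_def by blast+
  define E where "E x = dg (vmap exp x)" for x
  have EP: "E x \<in> PSym3" for x unfolding E_def by (rule dg_PSym3) simp
  have iso': "T (cj P U) = cj P (T U)" if "orthogonal_matrix P" "U \<in> PSym3" for P U
    using iso[of "transpose P" U] that by (simp add: orthogonal_matrix_transpose cj_def)
  define F where "F x = (\<chi> i. T (E x) $ i $ i)" for x
  have diag: "T (E x) = dg (F x)" for x
    unfolding F_def
  proof (rule diag_of_reflect)
    fix s :: "real^3" assume s: "\<And>i. (s$i)^2 = 1"
    have ss: "s$i * e * s$i = e" for i e
    proof -
      have "s$i * s$i = 1" using s[of i] by (simp add: power2_eq_square)
      then show ?thesis by (metis mult.assoc mult.commute mult_1)
    qed
    have "dg s ** E x ** dg s = E x"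
      unfolding E_def dg_mult by (rule arg_cong[where f=dg]) (simp add: vec_eq_iff ss)
    then show "dg s ** T (E x) ** dg s = T (E x)"
      using iso[OF orth_dg_sign[OF s] EP[of x]] by simp
  qed
  have Eadd: "E (x + y) = E x ** E y" for x y by (simp add: E_def dg_mult exp_add vmap_def)
  have Ecoax: "coaxial (E x) (E y)" for x y by (simp add: coaxial_def E_def dg_mult mult_ac)
  have Fadd: "F (x + y) = F x + F y" for x y
    using add[OF EP EP Ecoax, of x y] by (simp add: Eadd F_def vec_eq_iff)
  have contE: "continuous_on UNIV E" unfolding E_def by (intro cont_dg cont_vmap_exp continuous_on_id)
  have contTE: "continuous_on UNIV (\<lambda>x. T (E x))"
    by (rule continuous_on_compose2[OF cont contE]) (auto simp: EP)
  have contF: "continuous_on UNIV F"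
    unfolding F_def by (intro continuous_on_vec_lambda continuous_on_component contTE)
  define c where "c i k = F (axis k 1) $ i" for i k
  have Fscale: "F (t *\<^sub>R axis k 1) $ i = t * c i k" for t k i
  proof -
    have "(\<lambda>t. F (t *\<^sub>R axis k 1) $ i) t = t * (\<lambda>t. F (t *\<^sub>R axis k 1) $ i) 1"
    proof (rule cauchy_fe)
      show "F ((s + t) *\<^sub>R axis k 1) $ i = F (s *\<^sub>R axis k 1) $ i + F (t *\<^sub>R axis k 1) $ i" for s t
        by (simp add: scaleR_add_left Fadd)
      show "continuous_on UNIV (\<lambda>t. F (t *\<^sub>R axis k 1) $ i)"
        by (intro continuous_on_component continuous_on_compose2[OF contF] continuous_intros) auto
    qed
    then show ?thesis by (simp add: c_def)
  qed
  have Flin: "F x $ i = x$1 * c i 1 + x$2 * c i 2 + x$3 * c i 3" for x i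
  proof -
    have "x = x$1 *\<^sub>R axis 1 1 + x$2 *\<^sub>R axis 2 1 + x$3 *\<^sub>R axis 3 1"
      by (simp add: vec_eq_iff forall_3 axis_def)
    then have "F x = F (x$1 *\<^sub>R axis 1 1) + F (x$2 *\<^sub>R axis 2 1) + F (x$3 *\<^sub>R axis 3 1)"
      by (metis Fadd)
    then show ?thesis by (simp add: Fscale)
  qed
  have Fperm: "F (\<chi> i. x $ (sw a b i)) $ i = F x $ (sw a b i)" for x a b i
  proof -
    have "T (E (\<chi> i. x $ (sw a b i))) = transpose (Pm (sw a b)) ** T (E x) ** Pm (sw a b)"
    proof -
      have "E (\<chi> i. x $ (sw a b i)) = transpose (Pm (sw a b)) ** E x ** Pm (sw a b)"
        unfolding E_def by (simp add: Pm_dg sw_inv) (simp add: vec_eq_iff)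
      then show ?thesis using iso[OF orth_Pm[of "sw a b", OF sw_inv] EP] by simp
    qed
    then show ?thesis by (simp add: F_def perm_sandwich)
  qed
  have csym: "c i (sw a b k) = c (sw a b i) k" for a b i k
    using Fperm[of "axis k 1" a b i] by (simp add: c_def axis_sw)
  have s12: "sw 1 2 1 = 2" "sw 1 2 2 = 1" "sw 1 2 3 = 3" by (simp_all add: sw_def)
  have s13: "sw 1 3 1 = 3" "sw 1 3 3 = 1" "sw 1 3 2 = 2" by (simp_all add: sw_def)
  have s23: "sw 2 3 2 = 3" "sw 2 3 3 = 2" "sw 2 3 1 = 1" by (simp_all add: sw_def)
  have c22: "c 2 2 = c 1 1" using csym[of 1 1 2 2] s12 by simp
  have c33: "c 3 3 = c 1 1" using csym[of 1 1 3 3] s13 by simp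
  have c21: "c 2 1 = c 1 2" using csym[of 1 1 2 1] s12 by simp
  have c13: "c 1 3 = c 1 2" using csym[of 1 2 3 2] s23 by simp
  have c31: "c 3 1 = c 1 2" using csym[of 1 1 3 1] s13 c13 by simp
  have c23: "c 2 3 = c 1 2" using csym[of 2 1 3 1] s13 c21 by simp
  have c32: "c 3 2 = c 1 2" using csym[of 2 2 3 2] s23 c23 by simp
  define a where "a = c 1 1"
  define b where "b = c 1 2"
  define G where "G = (a - b) / 2"
  define La where "La = b"
  have TE: "T (E x) = Tf G La (dg x)" for x
  proof -
    have "F x = (a - b) *\<^sub>R x + (b * (x$1 + x$2 + x$3)) *\<^sub>R (\<chi> i. 1)"
      using Flin c22 c33 c21 c13 c31 c23 c32
      by (simp add: vec_eq_iff forall_3 a_def b_def algebra_simps)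
    then show ?thesis by (simp add: diag Tf_def G_def La_def trace_dg dg_add dg_scaleR dg_one)
  qed
  have TU: "T U = Tf G La (mlog U)" if U: "U \<in> PSym3" for U
  proof -
    obtain P d where P: "orthogonal_matrix P" and d: "\<forall>i. d$i > 0" and Ue: "U = cj P (dg d)"
      using PSym3_spectral[OF U] by blast
    have dE: "dg d = E (vmap ln d)" using d by (simp add: E_def vmap_comp o_def vmap_id)
    have "T U = cj P (Tf G La (dg (vmap ln d)))" unfolding Ue dE using iso'[OF P EP] TE by simp
    also have "\<dots> = Tf G La (mlog U)" using Ue mlog_cj[OF P] d Tf_cj[OF P] by simp
    finally show ?thesis .
  qed
  have G0: "G \<noteq> 0"
  proof
    assume G0: "G = 0"
    define v :: "real^3" where "v = vector [1, -1, 0]"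
    have "T (E v) = Tf G La (dg v)" by (rule TE)
    also have "\<dots> = 0" using G0 by (simp add: Tf_def trace_dg v_def vector_3)
    finally have "E v = mat 1" using zero EP by blast
    then have "E v $ 1 $ 1 = (mat 1 :: mat3) $ 1 $ 1" by simp
    then have "exp (1::real) = 1" by (simp add: E_def v_def vector_3 mat_def)
    then show False by simp
  qed
  have GL: "3*La + 2*G \<noteq> 0"
  proof
    assume GL0: "3*La + 2*G = 0"
    define v :: "real^3" where "v = (\<chi> i. 1)"
    have "T (E v) = Tf G La (dg v)" by (rule TE)
    also have "\<dots> = (2*G + 3*La) *\<^sub>R mat 1"
      by (simp add: Tf_def trace_dg v_def dg_one trace_one3 algebra_simps)
    also have "\<dots> = 0" using GL0 by (simp add: algebra_simps)
    finally have "E v = mat 1" using zero EP by blast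
    then have "E v $ 1 $ 1 = (mat 1 :: mat3) $ 1 $ 1" by simp
    then have "exp (1::real) = 1" by (simp add: E_def v_def mat_def)
    then show False by simp
  qed
  show ?thesis using G0 GL TU by blast
qed



lemma dev_form: "(2 * G) *\<^sub>R dev3 L + (K * trace L) *\<^sub>R mat 1 = Tf G (K - 2*G/3) L"
  by (simp add: dev3_def Tf_def algebra_simps scaleR_diff_right scaleR_diff_left)

theorem mainTheorem7:
  fixes T :: "real^3^3 \<Rightarrow> real^3^3"
  assumes "\<forall>U\<in>PSym3. T U \<in> Sym3"
  shows "(axioms_T T \<longleftrightarrow>
           (\<exists>G La::real. G \<noteq> 0 \<and> 3 * La + 2 * G \<noteq> 0 \<and>
              (\<forall>U\<in>PSym3. T U = (2 * G) *\<^sub>R mlog U + (La * trace (mlog U)) *\<^sub>R mat 1)))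
       \<and> (axioms_T T \<longleftrightarrow>
           (\<exists>G K::real. G \<noteq> 0 \<and> K \<noteq> 0 \<and>
              (\<forall>U\<in>PSym3. T U = (2 * G) *\<^sub>R dev3 (mlog U) + (K * trace (mlog U)) *\<^sub>R mat 1)))"
proof -
  have A: "axioms_T T \<longleftrightarrow> (\<exists>G La::real. G \<noteq> 0 \<and> 3 * La + 2 * G \<noteq> 0 \<and> (\<forall>U\<in>PSym3. T U = Tf G La (mlog U)))"
    using forward[of T] backward[of _ _ T] by blast
  have B: "(\<exists>G La::real. G \<noteq> 0 \<and> 3 * La + 2 * G \<noteq> 0 \<and> (\<forall>U\<in>PSym3. T U = Tf G La (mlog U)))
     \<longleftrightarrow> (\<exists>G K::real. G \<noteq> 0 \<and> K \<noteq> 0 \<and>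
              (\<forall>U\<in>PSym3. T U = (2 * G) *\<^sub>R dev3 (mlog U) + (K * trace (mlog U)) *\<^sub>R mat 1))"
  proof
    assume "\<exists>G La::real. G \<noteq> 0 \<and> 3 * La + 2 * G \<noteq> 0 \<and> (\<forall>U\<in>PSym3. T U = Tf G La (mlog U))"
    then obtain G La where h: "G \<noteq> 0" "3 * La + 2 * G \<noteq> 0" "\<forall>U\<in>PSym3. T U = Tf G La (mlog U)" by blast
    have "La + 2*G/3 \<noteq> 0" using h(2) by linarith
    moreover have "La = (La + 2*G/3) - 2*G/3" by simp
    ultimately show "\<exists>G K::real. G \<noteq> 0 \<and> K \<noteq> 0 \<and>
              (\<forall>U\<in>PSym3. T U = (2 * G) *\<^sub>R dev3 (mlog U) + (K * trace (mlog U)) *\<^sub>R mat 1)"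
      using h by (intro exI[of _ G] exI[of _ "La + 2*G/3"]) (simp add: dev_form)
  next
    assume "\<exists>G K::real. G \<noteq> 0 \<and> K \<noteq> 0 \<and>
              (\<forall>U\<in>PSym3. T U = (2 * G) *\<^sub>R dev3 (mlog U) + (K * trace (mlog U)) *\<^sub>R mat 1)"
    then obtain G K where h: "G \<noteq> 0" "K \<noteq> 0" 
      "\<forall>U\<in>PSym3. T U = (2 * G) *\<^sub>R dev3 (mlog U) + (K * trace (mlog U)) *\<^sub>R mat 1" by blast
    have "3 * (K - 2*G/3) + 2 * G \<noteq> 0" using h(2) by simp
    then show "\<exists>G La::real. G \<noteq> 0 \<and> 3 * La + 2 * G \<noteq> 0 \<and> (\<forall>U\<in>PSym3. T U = Tf G La (mlog U))"
      using h by (intro exI[of _ G] exI[of _ "K - 2*G/3"]) (simp add: dev_form)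
  qed
  show ?thesis using A B unfolding Tf_def by blast
qed


end
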